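(* Let $\mathbb{F}\in\{\mathbb{R},\mathbb{C}\}$ and let $X$ be a Banach algebra over $\mathbb{F}$ with unit element $\mathbf{1}$. Let $h:X\to X$ and $\phi,\psi:X^2\to[0,\infty)$ satisfy $$\|h(xyx)-h(x)yx-xh(y)x-xyh(x)\|\le\psi(x,y),$$ $$\|h(\lambda a x+by)-\lambda A h(x)-Bh(y)\|\le\phi(x,y)$$ for all $x,y\in X$ and all $\lambda\in\Lambda$, where $a,b,A,B\in\mathbb{F}$ are fixed with $ab\neq0$ and $\Lambda\subseteq\mathbb{F}$ is nonempty. Assume there is $\xi\in\Lambda\setminus\{0\}$ such that $d:=\xi A+B=\xi a+b$ satisfies $d\neq 0$ and $d\neq 1$, and that for all $x,y\in X$: $$\Phi(x):=\sum_{k=0}^{\infty}|d|^{-k-1}\phi(d^kx,d^kx)<\infty,\qquad \liminf_{k\to\infty}|d|^{-k}\phi(d^kx,d^ky)=0,$$ $$\liminf_{k\to\infty}|d|^{-3k}\psi(d^kx,d^ky)=0,\qquad \liminf_{k\to\infty}|d|^{-2k}\psi(d^kx,y)=0.$$ Then $h$ is a Jordan triple derivation. Furthermore, if $\Lambda$ has a bounded subset $\Lambda_0$ with $\Lambda_0\in\mathcal{B}_{\mathbb{F}}$, then $h$ is a linear Jordan triple derivation.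
   Context: A Jordan triple derivation on an algebra $X$ is an additive map $D:X\to X$ with $D(xyx)=D(x)yx+xD(y)x+xyD(x)$ for all $x,y\in X$; it is linear if moreover $D(\lambda x)=\lambda D(x)$ for all scalars $\lambda$ and $x\in X$. $\mathcal{B}_{\mathbb{F}}$ denotes the family of all sets $\Lambda\subseteq\mathbb{F}$ such that every additive function $f:\mathbb{F}\to X$ which is bounded on $\Lambda$ is continuous. *)

theory Defs
  imports "HOL-Analysis.Analysis"
begin

definition R_or_C :: "'f::real_normed_field itself \<Rightarrow> bool" where
  "R_or_C _ \<longleftrightarrow>
     (\<exists>\<phi>::real \<Rightarrow> 'f. bij \<phi> \<and> (\<forall>x y. \<phi> (x + y) = \<phi> x + \<phi> y \<and> \<phi> (x * y) = \<phi> x * \<phi> y)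
        \<and> (\<forall>x. norm (\<phi> x) = norm x)) \<or>
     (\<exists>\<phi>::complex \<Rightarrow> 'f. bij \<phi> \<and> (\<forall>x y. \<phi> (x + y) = \<phi> x + \<phi> y \<and> \<phi> (x * y) = \<phi> x * \<phi> y)
        \<and> (\<forall>x. norm (\<phi> x) = norm x))"

text \<open>sm is a scalar multiplication by 'f making the unital real Banach algebra 'a
  a unital Banach algebra over 'f (compatible with the real scaling).\<close>
definition banach_algebra_over ::
  "('f::real_normed_field \<Rightarrow> 'a::{real_normed_algebra_1,banach} \<Rightarrow> 'a) \<Rightarrow> bool" where
  "banach_algebra_over sm \<longleftrightarrow>
     (\<forall>c e x. sm (c + e) x = sm c x + sm e x) \<and>
     (\<forall>c x y. sm c (x + y) = sm c x + sm c y) \<and>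
     (\<forall>c e x. sm (c * e) x = sm c (sm e x)) \<and>
     (\<forall>x. sm 1 x = x) \<and>
     (\<forall>r x. sm (of_real r) x = scaleR r x) \<and>
     (\<forall>c x. norm (sm c x) = norm c * norm x) \<and>
     (\<forall>c x y. sm c (x * y) = sm c x * y \<and> sm c (x * y) = x * sm c y)"

definition jordan_triple_derivation :: "('a::ring \<Rightarrow> 'a) \<Rightarrow> bool" where
  "jordan_triple_derivation D \<longleftrightarrow>
     (\<forall>x y. D (x + y) = D x + D y) \<and>
     (\<forall>x y. D (x * y * x) = D x * y * x + x * D y * x + x * y * D x)"

definition linear_jordan_triple_derivation ::
  "('f \<Rightarrow> 'a \<Rightarrow> 'a) \<Rightarrow> ('a::ring \<Rightarrow> 'a) \<Rightarrow> bool" where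
  "linear_jordan_triple_derivation sm D \<longleftrightarrow>
     jordan_triple_derivation D \<and> (\<forall>c x. D (sm c x) = sm c (D x))"

definition B_F :: "'a::real_normed_vector itself \<Rightarrow> 'f::real_normed_field set set" where
  "B_F _ = {\<Lambda>. \<forall>f::'f \<Rightarrow> 'a. (\<forall>s t. f (s + t) = f s + f t) \<and> bounded (f ` \<Lambda>)
                   \<longrightarrow> continuous_on UNIV f}"

end

theory Submission
  imports Defs
begin


lemma liminf_zero_lim:
  fixes w :: "nat \<Rightarrow> 'b::real_normed_vector"
  assumes "w \<longlonglongrightarrow> W" "\<And>k. norm (w k) \<le> e k" "liminf (\<lambda>k. ereal (e k)) = 0"
  shows "W = 0"
proof -
  have "(\<lambda>k. ereal (norm (w k))) \<longlonglongrightarrow> ereal (norm W)"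
    using assms(1) by (intro tendsto_ereal tendsto_norm)
  hence "liminf (\<lambda>k. ereal (norm (w k))) = ereal (norm W)"
    by (simp add: lim_imp_Liminf)
  moreover have "liminf (\<lambda>k. ereal (norm (w k))) \<le> liminf (\<lambda>k. ereal (e k))"
    by (intro Liminf_mono) (use assms(2) in auto)
  ultimately have "norm W \<le> 0" using assms(3) by simp
  thus ?thesis by simp
qed

lemma additive_cont_real:
  fixes g :: "real \<Rightarrow> 'b::real_normed_vector"
  assumes add: "\<And>s t. g (s + t) = g s + g t" and cont: "continuous_on UNIV g"
  shows "g r = r *\<^sub>R g 1"
proof -
  have g0: "g 0 = 0" using add[of 0 0] by simp
  have gneg: "g (- s) = - g s" for s
  proof -
    have "g s + g (- s) = 0" using add[of s "-s"] g0 by simp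
    thus ?thesis by (simp add: eq_neg_iff_add_eq_0 add.commute)
  qed
  have gnat: "g (real n * s) = real n *\<^sub>R g s" for n s
    by (induction n) (auto simp: g0 add distrib_right scaleR_add_left)
  have gint: "g (of_int m * s) = of_int m *\<^sub>R g s" for m s
  proof (cases "m \<ge> 0")
    case True
    then obtain n where "m = int n" using nonneg_int_cases by blast
    thus ?thesis using gnat by simp
  next
    case False
    have "m \<le> 0" using False by simp
    then obtain n where "m = - int n" using nonpos_int_cases by metis
    thus ?thesis using gnat[of n s] gneg[of "real n * s"] by simp
  qed
  have grat: "g q = q *\<^sub>R g 1" if "q \<in> \<rat>" for q
  proof -
    from that obtain m n where q: "q = of_int m / of_int n" and n: "n \<noteq> 0"
      by (auto elim!: Rats_cases')
    have "of_int n *\<^sub>R g q = g (of_int n * q)" using gint by simp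
    also have "of_int n * q = of_int m * 1" using n q by simp
    also have "g \<dots> = of_int m *\<^sub>R g 1" by (rule gint)
    finally have e: "of_int n *\<^sub>R g q = of_int m *\<^sub>R g 1" .
    have "g q = inverse (of_int n) *\<^sub>R (of_int n *\<^sub>R g q)" using n by (simp only: scaleR_scaleR) simp
    also have "\<dots> = (of_int m / of_int n) *\<^sub>R g 1" unfolding e scaleR_scaleR by (simp only: divide_inverse_commute)
    finally show ?thesis using q by simp
  qed
  have "closed {r. g r = (\<lambda>r. r *\<^sub>R g 1) r}"
    by (rule closed_Collect_eq[OF cont]) (intro continuous_on_scaleR continuous_on_id continuous_on_const)
  moreover have "\<rat> \<subseteq> {r. g r = r *\<^sub>R g 1}" using grat by (intro subsetI CollectI)
  ultimately have "closure \<rat> \<subseteq> {r. g r = r *\<^sub>R g 1}" by (intro closure_minimal) auto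
  thus ?thesis by (auto simp: Rats_closure_real)
qed



lemma iso_real_hom:
  fixes \<phi> :: "real \<Rightarrow> 'f::real_normed_field"
  assumes add: "\<And>x y. \<phi> (x+y) = \<phi> x + \<phi> y" and mul: "\<And>x y. \<phi> (x*y) = \<phi> x * \<phi> y"
    and nrm: "\<And>x. norm (\<phi> x) = norm x"
  shows "\<phi> r = of_real r"
proof -
  have g0: "\<phi> 0 = 0" using add[of 0 0] by simp
  have gneg: "\<phi> (- s) = - \<phi> s" for s using add[of s "-s"] g0 by (metis add.commute eq_neg_iff_add_eq_0)
  have gdiff: "\<phi> x - \<phi> y = \<phi> (x - y)" for x y using add[of "x - y" y] by simp
  have cont: "continuous_on UNIV \<phi>"
    unfolding continuous_on_iff
  proof (intro ballI allI impI)
    fix x e :: real assume "e > 0"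
    show "\<exists>d>0. \<forall>x'\<in>UNIV. dist x' x < d \<longrightarrow> dist (\<phi> x') (\<phi> x) < e"
      by (rule exI[of _ e]) (use \<open>e > 0\<close> in \<open>auto simp: dist_norm gdiff nrm\<close>)
  qed
  have "\<phi> 1 * \<phi> 1 = \<phi> 1 * 1" using mul[of 1 1] by simp
  moreover have "\<phi> 1 \<noteq> 0" using nrm[of 1] by auto
  ultimately have one: "\<phi> 1 = 1" by (metis mult_left_cancel)
  have "\<phi> r = r *\<^sub>R \<phi> 1" by (rule additive_cont_real[OF add cont])
  thus ?thesis by (simp add: one scaleR_conv_of_real)
qed

theorem theorem2p3:
  fixes sm :: "'f::real_normed_field \<Rightarrow> 'a::{real_normed_algebra_1,banach} \<Rightarrow> 'a"
    and h :: "'a \<Rightarrow> 'a"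
    and \<phi> \<psi> :: "'a \<Rightarrow> 'a \<Rightarrow> real"
    and a b A B \<xi> d :: 'f
    and \<Lambda> :: "'f set"
  assumes field: "R_or_C TYPE('f)"
    and alg: "banach_algebra_over sm"
    and phi_nonneg: "\<forall>x y. \<phi> x y \<ge> 0"
    and psi_nonneg: "\<forall>x y. \<psi> x y \<ge> 0"
    and h_psi: "\<forall>x y. norm (h (x * y * x) - h x * y * x - x * h y * x - x * y * h x) \<le> \<psi> x y"
    and h_phi: "\<forall>x y. \<forall>l\<in>\<Lambda>.
                  norm (h (sm (l * a) x + sm b y) - sm (l * A) (h x) - sm B (h y)) \<le> \<phi> x y"
    and ab: "a * b \<noteq> 0"
    and Lne: "\<Lambda> \<noteq> {}"
    and xi: "\<xi> \<in> \<Lambda>" "\<xi> \<noteq> 0"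
    and d_def1: "d = \<xi> * A + B" and d_def2: "d = \<xi> * a + b"
    and d0: "d \<noteq> 0" and d1: "d \<noteq> 1"
    and Phi_fin: "\<forall>x. summable (\<lambda>k. \<phi> (sm (d ^ k) x) (sm (d ^ k) x) / norm d ^ (Suc k))"
    and lim_phi: "\<forall>x y. liminf (\<lambda>k. ereal (\<phi> (sm (d ^ k) x) (sm (d ^ k) y) / norm d ^ k)) = 0"
    and lim_psi3: "\<forall>x y. liminf (\<lambda>k. ereal (\<psi> (sm (d ^ k) x) (sm (d ^ k) y) / norm d ^ (3 * k))) = 0"
    and lim_psi2: "\<forall>x y. liminf (\<lambda>k. ereal (\<psi> (sm (d ^ k) x) y / norm d ^ (2 * k))) = 0"
  shows "jordan_triple_derivation h \<and>
         ((\<exists>\<Lambda>0 \<subseteq> \<Lambda>. bounded \<Lambda>0 \<and> \<Lambda>0 \<in> B_F TYPE('a))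
            \<longrightarrow> linear_jordan_triple_derivation sm h)"
  
proof -
  have smadd1: "\<And>c e x. sm (c + e) x = sm c x + sm e x" using alg unfolding banach_algebra_over_def by blast
  have smadd2: "\<And>c x y. sm c (x + y) = sm c x + sm c y" using alg unfolding banach_algebra_over_def by blast
  have smmult: "\<And>c e x. sm (c * e) x = sm c (sm e x)" using alg unfolding banach_algebra_over_def by blast
  have sm1: "\<And>x. sm 1 x = x" using alg unfolding banach_algebra_over_def by blast
  have smR: "\<And>r x. sm (of_real r) x = r *\<^sub>R x" using alg unfolding banach_algebra_over_def by blast
  have smnorm: "\<And>c x. norm (sm c x) = norm c * norm x" using alg unfolding banach_algebra_over_def by blast
  have smL: "\<And>c x y. sm c x * y = sm c (x * y)" using alg unfolding banach_algebra_over_def by metis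
  have smRt: "\<And>c x y. x * sm c y = sm c (x * y)" using alg unfolding banach_algebra_over_def by metis
  have sm0r: "\<And>c. sm c 0 = 0" using smadd2 by (metis add_cancel_right_right)
  have sm0l: "\<And>x. sm 0 x = 0" using smadd1 by (metis add_cancel_right_right add_0)
  have smminus: "\<And>c x. sm c (- x) = - sm c x" using smadd2 sm0r
    by (metis add.right_inverse eq_neg_iff_add_eq_0)
  have smdiff: "\<And>c x y. sm c (x - y) = sm c x - sm c y"
    using smadd2 smminus by (metis diff_conv_add_uminus)
  have smcomm: "\<And>c e x. sm c (sm e x) = sm e (sm c x)" by (metis smmult mult.commute)
  have smlin: "\<And>c. bounded_linear (sm c)"
  proof -
    fix c
    show "bounded_linear (sm c)"
    proof (rule bounded_linear_intro)
      show "sm c (x + y) = sm c x + sm c y" for x y by (rule smadd2)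
      show "sm c (r *\<^sub>R x) = r *\<^sub>R sm c x" for r x by (metis smR smcomm)
      show "norm (sm c x) \<le> norm x * norm c" for x by (simp add: smnorm mult.commute)
    qed
  qed
  have smtend: "\<And>c X L. X \<longlonglongrightarrow> L \<Longrightarrow> (\<lambda>n. sm c (X n)) \<longlonglongrightarrow> sm c L"
    using bounded_linear.tendsto[OF smlin] by blast
  have dn0: "\<And>n. d ^ n \<noteq> 0" using d0 by simp
  have smcancel: "\<And>n x. sm (inverse d ^ n) (sm (d ^ n) x) = x"
    by (metis smmult sm1 power_inverse dn0 inverse_eq_divide divide_self_if mult.commute right_inverse)
  define u where "u n x = sm (inverse d ^ n) (h (sm (d ^ n) x))" for n x
  define T where "T x = lim (\<lambda>n. u n x)" for x
  have key: "\<And>z. norm (h (sm d z) - sm d (h z)) \<le> \<phi> z z"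
  proof -
    fix z
    have "norm (h (sm (\<xi> * a) z + sm b z) - sm (\<xi> * A) (h z) - sm B (h z)) \<le> \<phi> z z"
      using h_phi xi(1) by blast
    moreover have "sm (\<xi> * a) z + sm b z = sm d z" using smadd1 d_def2 by metis
    moreover have "sm (\<xi> * A) (h z) + sm B (h z) = sm d (h z)" using smadd1 d_def1 by metis
    ultimately show "norm (h (sm d z) - sm d (h z)) \<le> \<phi> z z" by (simp add: diff_diff_eq)
  qed
  have conv: "\<And>x. (\<lambda>n. u n x) \<longlonglongrightarrow> T x"
  proof -
    fix x
    define \<delta> where "\<delta> k = u (Suc k) x - u k x" for k
    have \<delta>eq: "\<delta> k = sm (inverse d ^ Suc k) (h (sm d (sm (d^k) x)) - sm d (h (sm (d^k) x)))" for k
    proof -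
      have "sm (inverse d ^ Suc k) (sm d v) = sm (inverse d ^ k) v" for v
      proof -
        have "inverse d ^ Suc k * d = inverse d ^ k" using d0 by simp
        thus ?thesis by (metis smmult)
      qed
      moreover have "sm (d ^ Suc k) x = sm d (sm (d^k) x)" by (simp add: smmult)
      ultimately show ?thesis unfolding \<delta>_def u_def by (simp add: smdiff)
    qed
    have \<delta>bd: "norm (\<delta> k) \<le> \<phi> (sm (d ^ k) x) (sm (d ^ k) x) / norm d ^ (Suc k)" for k
    proof -
      have "norm (\<delta> k) = norm (h (sm d (sm (d^k) x)) - sm d (h (sm (d^k) x))) / norm d ^ Suc k"
        unfolding \<delta>eq smnorm by (simp add: norm_mult norm_power norm_inverse divide_inverse_commute power_inverse)
      also have "\<dots> \<le> \<phi> (sm (d ^ k) x) (sm (d ^ k) x) / norm d ^ (Suc k)"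
        using key d0 by (intro divide_right_mono) auto
      finally show ?thesis .
    qed
    have "summable \<delta>"
      by (rule summable_comparison_test[OF _ spec[OF Phi_fin, of x]]) (use \<delta>bd in blast)
    hence "(\<lambda>n. \<Sum>k<n. \<delta> k) \<longlonglongrightarrow> suminf \<delta>" by (rule summable_LIMSEQ)
    hence "(\<lambda>n. u 0 x + (\<Sum>k<n. \<delta> k)) \<longlonglongrightarrow> u 0 x + suminf \<delta>" by (intro tendsto_add tendsto_const)
    moreover have "(\<lambda>n. u 0 x + (\<Sum>k<n. \<delta> k)) = (\<lambda>n. u n x)"
    proof
      fix n show "u 0 x + (\<Sum>k<n. \<delta> k) = u n x"
        using sum_lessThan_telescope[of "\<lambda>k. u k x" n] by (simp add: \<delta>_def)
    qed
    ultimately have "(\<lambda>n. u n x) \<longlonglongrightarrow> u 0 x + suminf \<delta>" by simp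
    hence "convergent (\<lambda>n. u n x)" by (auto simp: convergent_def)
    thus "(\<lambda>n. u n x) \<longlonglongrightarrow> T x" unfolding T_def by (simp add: convergent_LIMSEQ_iff)
  qed
  have convm: "\<And>m x. m > 0 \<Longrightarrow> (\<lambda>k. u (m * k) x) \<longlonglongrightarrow> T x"
  proof -
    fix m :: nat and x assume "m > 0"
    hence "strict_mono (\<lambda>k. m * k)" by (simp add: strict_mono_def)
    from LIMSEQ_subseq_LIMSEQ[OF conv this] show "(\<lambda>k. u (m * k) x) \<longlonglongrightarrow> T x" by (simp add: o_def)
  qed

  have eqA: "\<And>l z w. l \<in> \<Lambda> \<Longrightarrow> T (sm (l*a) z + sm b w) = sm (l*A) (T z) + sm B (T w)"
  proof -
    fix l z w assume l: "l \<in> \<Lambda>"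
    define wk where "wk k = sm (inverse d ^ k) (h (sm (l*a) (sm (d^k) z) + sm b (sm (d^k) w))
        - sm (l*A) (h (sm (d^k) z)) - sm B (h (sm (d^k) w)))" for k
    have bd: "norm (wk k) \<le> \<phi> (sm (d ^ k) z) (sm (d ^ k) w) / norm d ^ k" for k
    proof -
      have "norm (wk k) = norm (h (sm (l*a) (sm (d^k) z) + sm b (sm (d^k) w))
        - sm (l*A) (h (sm (d^k) z)) - sm B (h (sm (d^k) w))) / norm d ^ k"
        unfolding wk_def smnorm by (simp add: norm_power norm_inverse divide_inverse_commute power_inverse)
      also have "\<dots> \<le> \<phi> (sm (d ^ k) z) (sm (d ^ k) w) / norm d ^ k"
        using h_phi l d0 by (intro divide_right_mono) auto
      finally show ?thesis .
    qed
    have weq: "wk k = u k (sm (l*a) z + sm b w) - sm (l*A) (u k z) - sm B (u k w)" for k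
    proof -
      have "sm (d^k) (sm (l*a) z + sm b w) = sm (l*a) (sm (d^k) z) + sm b (sm (d^k) w)"
        by (simp add: smadd2 smcomm)
      thus ?thesis unfolding wk_def u_def by (simp add: smdiff smcomm)
    qed
    have "(\<lambda>k. wk k) \<longlonglongrightarrow> T (sm (l*a) z + sm b w) - sm (l*A) (T z) - sm B (T w)"
      unfolding weq by (intro tendsto_diff conv smtend)
    from liminf_zero_lim[OF this bd] lim_phi
    show "T (sm (l*a) z + sm b w) = sm (l*A) (T z) + sm B (T w)" by (simp add: diff_diff_eq)
  qed
  have eqJ: "\<And>x y. T (x*y*x) = T x * y * x + x * h y * x + x * y * T x"
  proof -
    fix x y
    define wk where "wk k = sm (inverse d ^ (2*k)) (h (sm (d^k) x * y * sm (d^k) x)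
       - h (sm (d^k) x) * y * sm (d^k) x - sm (d^k) x * h y * sm (d^k) x - sm (d^k) x * y * h (sm (d^k) x))" for k
    have bd: "norm (wk k) \<le> \<psi> (sm (d ^ k) x) y / norm d ^ (2*k)" for k
    proof -
      have "norm (wk k) = norm (h (sm (d^k) x * y * sm (d^k) x)
       - h (sm (d^k) x) * y * sm (d^k) x - sm (d^k) x * h y * sm (d^k) x - sm (d^k) x * y * h (sm (d^k) x)) / norm d ^ (2*k)"
        unfolding wk_def smnorm by (simp add: norm_power norm_inverse divide_inverse_commute power_inverse)
      also have "\<dots> \<le> \<psi> (sm (d ^ k) x) y / norm d ^ (2*k)"
        using h_psi d0 by (intro divide_right_mono) auto
      finally show ?thesis .
    qed
    have weq: "wk k = u (2*k) (x*y*x) - u k x * y * x - x * h y * x - x * y * u k x" for k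
    proof -
      have c0: "inverse d ^ (2*k) = inverse (d^k) * inverse (d^k)"
        by (simp add: mult_2 power_add power_inverse)
      have c1: "inverse d ^ (2*k) * (d^k * d^k) = 1" unfolding c0 using dn0[of k]
        by (simp add: field_simps)
      have c2: "inverse d ^ (2*k) * d^k = inverse d ^ k" unfolding c0 unfolding power_inverse using dn0[of k]
        by (simp add: mult.assoc)
      have e1: "sm (d^k) x * y * sm (d^k) x = sm (d^(2*k)) (x*y*x)"
        by (simp add: smL smRt smmult[symmetric] mult_2 power_add)
      have e2: "sm (inverse d ^ (2*k)) (h (sm (d^k) x) * y * sm (d^k) x) = u k x * y * x"
        unfolding u_def by (simp add: smL smRt smmult[symmetric] c2)
      have e3: "sm (inverse d ^ (2*k)) (sm (d^k) x * h y * sm (d^k) x) = x * h y * x"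
        by (simp add: smL smRt smmult[symmetric] c1 sm1)
      have e4: "sm (inverse d ^ (2*k)) (sm (d^k) x * y * h (sm (d^k) x)) = x * y * u k x"
        unfolding u_def by (simp add: smL smRt smmult[symmetric] c2)
      show ?thesis unfolding wk_def smdiff e2 e3 e4 by (simp add: e1 u_def)
    qed
    have "(\<lambda>k. wk k) \<longlonglongrightarrow> T (x*y*x) - T x * y * x - x * h y * x - x * y * T x"
      unfolding weq by (intro tendsto_diff tendsto_mult tendsto_const conv convm) auto
    from liminf_zero_lim[OF this bd] lim_psi2
    show "T (x*y*x) = T x * y * x + x * h y * x + x * y * T x" by (simp add: diff_diff_eq)
  qed
  have T1: "T 1 = 0"
  proof -
    define xk where "xk k = sm (d^k) (1::'a)" for k
    define wk where "wk k = sm (inverse d ^ (3*k)) (h (xk k * xk k * xk k)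
       - h (xk k) * xk k * xk k - xk k * h (xk k) * xk k - xk k * xk k * h (xk k))" for k
    have bd: "norm (wk k) \<le> \<psi> (sm (d ^ k) 1) (sm (d ^ k) 1) / norm d ^ (3*k)" for k
    proof -
      have "norm (wk k) = norm (h (xk k * xk k * xk k)
       - h (xk k) * xk k * xk k - xk k * h (xk k) * xk k - xk k * xk k * h (xk k)) / norm d ^ (3*k)"
        unfolding wk_def smnorm by (simp add: norm_power norm_inverse divide_inverse_commute power_inverse)
      also have "\<dots> \<le> \<psi> (sm (d ^ k) 1) (sm (d ^ k) 1) / norm d ^ (3*k)"
        using h_psi d0 unfolding xk_def by (intro divide_right_mono) auto
      finally show ?thesis .
    qed
    have c2: "inverse d ^ (3*k) * (d^k * d^k) = inverse d ^ k" for k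
    proof -
      have "inverse d ^ (3*k) = inverse (d^k) * (inverse (d^k) * inverse (d^k))"
        by (simp add: numeral_3_eq_3 power_add power_inverse)
      thus ?thesis unfolding power_inverse using dn0[of k] by (simp add: field_simps)
    qed
    have weq: "wk k = u (3*k) 1 - u k 1 - u k 1 - u k 1" for k
    proof -
      have e1: "xk k * xk k * xk k = sm (d^(3*k)) 1"
        unfolding xk_def by (simp add: smL smRt smmult[symmetric] numeral_3_eq_3 power_add)
      have e2: "sm (inverse d ^ (3*k)) (h (xk k) * xk k * xk k) = u k 1"
        unfolding u_def xk_def by (simp add: smL smRt smmult[symmetric] c2 sm1)
      have e3: "sm (inverse d ^ (3*k)) (xk k * h (xk k) * xk k) = u k 1"
        unfolding u_def xk_def by (simp add: smL smRt smmult[symmetric] c2 sm1)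
      have e4: "sm (inverse d ^ (3*k)) (xk k * xk k * h (xk k)) = u k 1"
        unfolding u_def xk_def by (simp add: smL smRt smmult[symmetric] c2 sm1)
      show ?thesis unfolding wk_def smdiff e2 e3 e4 by (simp add: e1 u_def)
    qed
    have "(\<lambda>k. wk k) \<longlonglongrightarrow> T 1 - T 1 - T 1 - T 1"
      unfolding weq by (intro tendsto_diff conv convm) auto
    from liminf_zero_lim[OF this bd spec[OF spec[OF lim_psi3, of 1], of 1]]
    have z: "T 1 - T 1 - T 1 - T 1 = 0" .
    have "T 1 + T 1 = -(T 1 - T 1 - T 1 - T 1)" by (simp add: algebra_simps)
    also have "\<dots> = 0" unfolding z by simp
    finally have "T 1 + T 1 = 0" .
    hence "(2::real) *\<^sub>R T 1 = 0" by (simp add: scaleR_2)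
    thus "T 1 = 0" by simp
  qed
  have hT: "\<And>y. h y = T y" using eqJ[of 1] T1 by simp

  have T0: "T 0 = 0"
  proof -
    have "T 0 = sm (\<xi>*A) (T 0) + sm B (T 0)" using eqA[OF xi(1), of 0 0] by (simp add: sm0r)
    hence "T 0 = sm d (T 0)" by (simp add: d_def1 smadd1)
    moreover have "sm d (T 0) = sm (d - 1) (T 0) + T 0" using smadd1[of "d-1" 1 "T 0"] sm1 by simp
    ultimately have "sm (d - 1) (T 0) = 0" by simp
    hence "norm (d - 1) * norm (T 0) = 0" by (metis smnorm norm_zero)
    thus ?thesis using d1 by simp
  qed
  have TA: "\<And>l z. l \<in> \<Lambda> \<Longrightarrow> T (sm (l*a) z) = sm (l*A) (T z)"
    using eqA[of _ _ 0] by (simp add: sm0r T0)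
  have TB: "\<And>w. T (sm b w) = sm B (T w)"
    using eqA[OF xi(1), of 0] by (simp add: sm0r T0)
  have a0: "a \<noteq> 0" and b0: "b \<noteq> 0" using ab by auto
  have Tadd: "\<And>x y. T (x + y) = T x + T y"
  proof -
    fix x y
    define z where "z = sm (inverse (\<xi>*a)) x"
    define w where "w = sm (inverse b) y"
    have zx: "sm (\<xi>*a) z = x" unfolding z_def smmult[symmetric] using a0 xi(2) by (simp add: sm1 field_simps)
    have wy: "sm b w = y" unfolding w_def smmult[symmetric] using b0 by (simp add: sm1)
    have "T (x + y) = sm (\<xi>*A) (T z) + sm B (T w)" using eqA[OF xi(1), of z w] zx wy by simp
    also have "\<dots> = T x + T y" using TA[OF xi(1), of z] TB[of w] zx wy by simp
    finally show "T (x + y) = T x + T y" .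
  qed
  have hadd: "\<And>x y. h (x + y) = h x + h y" using Tadd hT by simp
  have jord: "jordan_triple_derivation h"
    unfolding jordan_triple_derivation_def using hadd eqJ hT by simp
  have h1: "h 1 = 0" using hT T1 by simp
  have hA: "\<And>l z. l \<in> \<Lambda> \<Longrightarrow> h (sm (l*a) z) = sm (l*A) (h z)" using TA hT by simp
  have h0: "h 0 = 0" using hT T0 by simp
  have hneg: "\<And>x. h (- x) = - h x" using hadd h0 by (metis add.right_inverse eq_neg_iff_add_eq_0)
  have dbl: "\<And>p q :: 'a. p + p = q + q \<Longrightarrow> p = q"
  proof -
    fix p q :: 'a assume "p + p = q + q"
    hence "(2::real) *\<^sub>R p = 2 *\<^sub>R q" by (simp add: scaleR_2)
    thus "p = q" by simp
  qed
  have Sadd: "\<And>c e. (\<forall>x. h (sm c x) = sm c (h x)) \<Longrightarrow> (\<forall>x. h (sm e x) = sm e (h x)) \<Longrightarrow>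
     (\<forall>x. h (sm (c + e) x) = sm (c + e) (h x))"
    by (simp add: smadd1 hadd)
  have Smul: "\<And>c e. (\<forall>x. h (sm c x) = sm c (h x)) \<Longrightarrow> (\<forall>x. h (sm e x) = sm e (h x)) \<Longrightarrow>
     (\<forall>x. h (sm (c * e) x) = sm (c * e) (h x))"
    by (simp add: smmult)
  have Sj: "\<And>j. j * j = -1 \<Longrightarrow> (\<forall>x. h (sm j x) = sm j (h x))"
  proof
    fix j :: 'f and x :: 'a assume jj: "j * j = -1"
    have j0: "j \<noteq> 0" using jj by auto
    define J where "J = sm j (1::'a)"
    have JL: "\<And>v. J * v = sm j v" unfolding J_def by (simp add: smL)
    have JR: "\<And>v. v * J = sm j v" unfolding J_def by (simp add: smRt)
    have smm1: "\<And>v. sm (-1) v = - v" using smR[of "-1"] by simp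
    have jjv: "\<And>v. sm j (sm j v) = - v" using jj smm1 by (metis smmult)
    have "h (J * 1 * J) = h J * 1 * J + J * h 1 * J + J * 1 * h J"
      using jord unfolding jordan_triple_derivation_def by blast
    moreover have "J * 1 * J = - 1" using JR J_def jjv by simp
    ultimately have "0 = sm j (h J) + sm j (h J)" using hneg h1 JR JL sm0r by simp
    hence "sm j (h J + h J) = 0" by (simp add: smadd2)
    hence "norm j * norm (h J + h J) = 0" by (metis smnorm norm_zero)
    hence "h J + h J = 0" using j0 by simp
    hence hJ: "h J = 0" using dbl[of "h J" 0] by simp
    have "h ((1 + J) * x * (1 + J)) = h (1 + J) * x * (1 + J) + (1 + J) * h x * (1 + J) + (1 + J) * x * h (1 + J)"
      using jord unfolding jordan_triple_derivation_def by blast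
    moreover have "h (1 + J) = 0" using hadd h1 hJ by simp
    moreover have "\<And>v. (1 + J) * v * (1 + J) = sm j v + sm j v"
      by (simp add: distrib_left distrib_right JL JR jjv smadd2 algebra_simps)
    ultimately have "h (sm j x + sm j x) = sm j (h x) + sm j (h x)" by simp
    thus "h (sm j x) = sm j (h x)" using hadd dbl by metis
  qed
  have hR: "\<And>r x. h (sm (of_real r) x) = sm (of_real r) (h x)" if hyp: "\<exists>\<Lambda>0 \<subseteq> \<Lambda>. bounded \<Lambda>0 \<and> \<Lambda>0 \<in> B_F TYPE('a)"
  proof -
    fix r x
    obtain \<Lambda>0 where L0: "\<Lambda>0 \<subseteq> \<Lambda>" "bounded \<Lambda>0" "\<Lambda>0 \<in> B_F TYPE('a)" using hyp by blast
    obtain M where M: "\<forall>l\<in>\<Lambda>0. norm l \<le> M" using L0(2) unfolding bounded_iff by blast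
    define x' where "x' = sm (inverse a) x"
    have xx: "sm a x' = x" unfolding x'_def smmult[symmetric] using a0 by (simp add: sm1)
    define f where "f t = h (sm t x)" for t
    have fadd: "\<forall>s t. f (s+t) = f s + f t" by (simp add: f_def smadd1 hadd)
    have "bounded (f ` \<Lambda>0)" unfolding bounded_iff
    proof (intro exI[of _ "M * norm A * norm (h x')"] ballI)
      fix v assume "v \<in> f ` \<Lambda>0"
      then obtain l where l: "l \<in> \<Lambda>0" "v = f l" by blast
      have "f l = h (sm (l*a) x')" unfolding f_def using xx by (simp add: smmult)
      also have "\<dots> = sm (l*A) (h x')" using hA l(1) L0(1) by blast
      finally have "norm v = norm l * norm A * norm (h x')" using l(2) by (simp add: smnorm norm_mult)
      also have "\<dots> \<le> M * norm A * norm (h x')" using M l(1) by (intro mult_right_mono) auto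
      finally show "norm v \<le> M * norm A * norm (h x')" .
    qed
    hence cont: "continuous_on UNIV f" using L0(3) fadd unfolding B_F_def by blast
    have cont2: "continuous_on UNIV (\<lambda>r::real. f (of_real r))"
      by (rule continuous_on_compose2[OF cont]) (auto intro: continuous_intros)
    have "f (of_real r) = r *\<^sub>R f (of_real 1)"
      by (rule additive_cont_real[OF _ cont2]) (simp add: fadd)
    thus "h (sm (of_real r) x) = sm (of_real r) (h x)" by (simp add: f_def smR sm1)
  qed
  have lin: "\<And>c x. h (sm c x) = sm c (h x)" if hyp: "\<exists>\<Lambda>0 \<subseteq> \<Lambda>. bounded \<Lambda>0 \<and> \<Lambda>0 \<in> B_F TYPE('a)"
  proof -
    note hR = hR[OF hyp]
    fix c x
    from field[unfolded R_or_C_def] show "h (sm c x) = sm c (h x)"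
    proof
      assume "\<exists>\<phi>::real \<Rightarrow> 'f. bij \<phi> \<and> (\<forall>x y. \<phi> (x + y) = \<phi> x + \<phi> y \<and> \<phi> (x * y) = \<phi> x * \<phi> y)
        \<and> (\<forall>x. norm (\<phi> x) = norm x)"
      then obtain \<phi> :: "real \<Rightarrow> 'f" where p: "bij \<phi>" "\<forall>x y. \<phi> (x + y) = \<phi> x + \<phi> y \<and> \<phi> (x * y) = \<phi> x * \<phi> y"
        "\<forall>x. norm (\<phi> x) = norm x" by blast
      obtain r where "c = \<phi> r" using p(1) by (metis bij_pointE)
      also have "\<phi> r = of_real r" using p by (intro iso_real_hom) auto
      finally show ?thesis using hR by simp
    next
      assume "\<exists>\<phi>::complex \<Rightarrow> 'f. bij \<phi> \<and> (\<forall>x y. \<phi> (x + y) = \<phi> x + \<phi> y \<and> \<phi> (x * y) = \<phi> x * \<phi> y)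
        \<and> (\<forall>x. norm (\<phi> x) = norm x)"
      then obtain \<phi> :: "complex \<Rightarrow> 'f" where p: "bij \<phi>" "\<forall>x y. \<phi> (x + y) = \<phi> x + \<phi> y \<and> \<phi> (x * y) = \<phi> x * \<phi> y"
        "\<forall>x. norm (\<phi> x) = norm x" by blast
      have pr: "\<phi> (complex_of_real r) = of_real r" for r
        using p by (intro iso_real_hom[of "\<lambda>r. \<phi> (complex_of_real r)"]) auto
      have pneg: "\<phi> (- z) = - \<phi> z" for z using p(2) pr[of 0]
        by (metis add.right_inverse eq_neg_iff_add_eq_0 of_real_0)
      have "\<phi> \<i> * \<phi> \<i> = \<phi> (\<i> * \<i>)" using p(2) by metis
      also have "\<dots> = \<phi> (- 1)" by simp
      also have "\<dots> = - \<phi> (complex_of_real 1)" using pneg by simp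
      finally have jj: "\<phi> \<i> * \<phi> \<i> = -1" using pr[of 1] by simp
      obtain z where "c = \<phi> z" using p(1) by (metis bij_pointE)
      also have "z = complex_of_real (Re z) + \<i> * complex_of_real (Im z)" by (simp add: complex_eq)
      finally have "c = \<phi> (complex_of_real (Re z) + \<i> * complex_of_real (Im z))" .
      hence "c = of_real (Re z) + \<phi> \<i> * of_real (Im z)" using p(2) pr by simp
      moreover have "\<forall>x. h (sm (of_real (Re z) + \<phi> \<i> * of_real (Im z)) x) = sm (of_real (Re z) + \<phi> \<i> * of_real (Im z)) (h x)"
        by (intro Sadd Smul Sj jj allI hR)
      ultimately show ?thesis by simp
    qed
  qed
  show ?thesis using jord lin unfolding linear_jordan_triple_derivation_def by blast
qed

end
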